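(* Let $n,r\geq 1$ and let $F$ be a real-valued mapping defined on $\bigcup_{\eta\subset[n]}\Pi(\eta\times[r])$ which has the connectedness factorization property: for every nonempty $\eta\subset[n]$ and every $\rho\in\Pi(\eta\times[r])$, $$F(\rho)=\prod_{b\subset\eta:\ b\times[r]\in\rho\vee\pi_\eta}F(\rho_b),\qquad \rho_b:=\{c\in\rho: c\subset b\times[r]\}.$$ Then for every nonempty $\eta\subset[n]$ the virtual cumulant of $F$ satisfies $$C_F(\eta)=\sum_{\sigma\in\Pi(\eta\times[r]):\ \sigma\vee\pi_\eta=\widehat{1}}F(\sigma),$$ the sum being over connected partitions of $\eta\times[r]$.
   Context: $[n]=\{1,\dots,n\}$; $\Pi(S)$ is the set of partitions of a finite set $S$; $\rho\vee\sigma$ is the finest partition coarser than $\rho$ and $\sigma$, $\widehat{1}$ is the one-block partition. For $\eta\subset[n]$, $\pi_\eta=\{\pi_k:k\in\eta\}$ with $\pi_k=\{(k,1),\dots,(k,r)\}$; note that every block of $\rho\vee\pi_\eta$ has the form $b\times[r]$ with $b\subset\eta$. The Möbius transform is $\widehat{F}(\eta):=\sum_{\rho\in\Pi(\eta\times[r])}F(\rho)$, $\widehat F(\emptyset)=0$. The virtual cumulant $C_F$ is defined by $C_F(\eta)=\widehat F(\eta)$ when $|\eta|=1$, and recursively $C_F(\eta)=\widehat F(\eta)-\sum_{\sigma\in\Pi(\eta),\,|\sigma|\geq 2}\prod_{b\in\sigma}C_F(b)$ for $|\eta|\geq 2$. *)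

theory Defs
  imports Complex_Main "HOL-Library.Disjoint_Sets"
begin

definition same_block :: "'a set set \<Rightarrow> ('a \<times> 'a) set" where
  "same_block P = {(x, y). \<exists>B\<in>P. x \<in> B \<and> y \<in> B}"

text \<open>Join of two partitions of the same ground set: the finest partition coarser than
  both, i.e. the classes of the equivalence closure of the union of their block relations.\<close>
definition pjoin :: "'a set set \<Rightarrow> 'a set set \<Rightarrow> 'a set set" where
  "pjoin \<rho> \<sigma> = (\<Union>\<rho>) // ((same_block \<rho> \<union> same_block \<sigma>)\<^sup>*)"

definition pi_eta :: "nat \<Rightarrow> nat set \<Rightarrow> (nat \<times> nat) set set" where
  "pi_eta r \<eta> = {{k} \<times> {1..r} | k. k \<in> \<eta>}"

definition mobius :: "nat \<Rightarrow> ((nat \<times> nat) set set \<Rightarrow> real) \<Rightarrow> nat set \<Rightarrow> real" where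
  "mobius r F \<eta> = (if \<eta> = {} then 0
     else (\<Sum>\<rho>\<in>{\<rho>. partition_on (\<eta> \<times> {1..r}) \<rho>}. F \<rho>))"

lemma block_card_less:
  assumes "finite \<eta>" "partition_on \<eta> \<sigma>" "card \<sigma> \<ge> 2" "b \<in> \<sigma>"
  shows "card b < card \<eta>"
proof -
  have "\<sigma> - {b} \<noteq> {}"
  proof
    assume "\<sigma> - {b} = {}"
    then have "\<sigma> \<subseteq> {b}" by blast
    then have "card \<sigma> \<le> card {b}" by (intro card_mono) auto
    then have "card \<sigma> \<le> 1" by simp
    with assms show False by simp
  qed
  then obtain c where c: "c \<in> \<sigma>" "c \<noteq> b" by blast
  have "c \<noteq> {}" using assms(2) c(1) by (auto simp: partition_on_def)
  then obtain x where x: "x \<in> c" by blast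
  have "x \<notin> b" using assms(2) c x assms(4) by (auto simp: partition_on_def disjoint_def)
  moreover have "x \<in> \<eta>" "b \<subseteq> \<eta>" using assms(2) c x assms(4) by (auto simp: partition_on_def)
  ultimately have "b \<subset> \<eta>" by blast
  then show ?thesis using assms(1) by (simp add: psubset_card_mono)
qed

text \<open>Virtual cumulant C_F, defined by the recursion in the paper (value on the empty set
  is irrelevant).\<close>
function vcum :: "nat \<Rightarrow> ((nat \<times> nat) set set \<Rightarrow> real) \<Rightarrow> nat set \<Rightarrow> real" where
  "vcum r F \<eta> = (if infinite \<eta> \<or> card \<eta> \<le> 1 then mobius r F \<eta>
     else mobius r F \<eta> - (\<Sum>\<sigma>\<in>{\<sigma>. partition_on \<eta> \<sigma> \<and> card \<sigma> \<ge> 2}. \<Prod>b\<in>\<sigma>. vcum r F b))"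
  by auto
termination
  by (relation "measure (\<lambda>(r, F, \<eta>). card \<eta>)") (auto intro!: block_card_less)

end

theory Submission imports Defs "HOL-Library.FuncSet" begin

lemma path_restrict:
  assumes "(x,y) \<in> Q\<^sup>*" "x \<in> A"
    and "\<And>u v. u \<in> A \<Longrightarrow> (u,v) \<in> Q \<Longrightarrow> (u,v) \<in> Q' \<and> v \<in> A"
  shows "(x,y) \<in> Q'\<^sup>* \<and> y \<in> A"
  using assms(1)
proof (induction rule: rtrancl_induct)
  case base then show ?case using assms(2) by simp
next
  case (step u v)
  then show ?case using assms(3)[of u v] by (meson rtrancl.rtrancl_into_rtrancl)
qed

definition Rel :: "(nat\<times>nat) set set \<Rightarrow> nat \<Rightarrow> nat set \<Rightarrow> ((nat\<times>nat)\<times>(nat\<times>nat)) set" where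
  "Rel \<rho> r \<eta> = (same_block \<rho> \<union> same_block (pi_eta r \<eta>))\<^sup>*"

lemma pjoin_Rel: "pjoin \<rho> (pi_eta r \<eta>) = (\<Union>\<rho>) // Rel \<rho> r \<eta>"
  by (simp add: pjoin_def Rel_def)

lemma same_block_pi: "(u,v) \<in> same_block (pi_eta r \<eta>) \<longleftrightarrow>
   fst u = fst v \<and> fst u \<in> \<eta> \<and> snd u \<in> {1..r} \<and> snd v \<in> {1..r}"
proof
  assume "(u,v) \<in> same_block (pi_eta r \<eta>)"
  then show "fst u = fst v \<and> fst u \<in> \<eta> \<and> snd u \<in> {1..r} \<and> snd v \<in> {1..r}"
    by (auto simp: same_block_def pi_eta_def)
next
  assume h: "fst u = fst v \<and> fst u \<in> \<eta> \<and> snd u \<in> {1..r} \<and> snd v \<in> {1..r}"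
  then have "{fst u} \<times> {1..r} \<in> pi_eta r \<eta>" by (auto simp: pi_eta_def)
  moreover have "u \<in> {fst u} \<times> {1..r}" "v \<in> {fst u} \<times> {1..r}" using h by (auto simp: mem_Times_iff)
  ultimately show "(u,v) \<in> same_block (pi_eta r \<eta>)" by (auto simp: same_block_def)
qed

lemma same_block_iff: "(u,v) \<in> same_block P \<longleftrightarrow> (\<exists>B\<in>P. u \<in> B \<and> v \<in> B)"
  by (simp add: same_block_def)

lemma sym_Rel: "(x,y) \<in> Rel \<rho> r \<eta> \<Longrightarrow> (y,x) \<in> Rel \<rho> r \<eta>"
proof -
  have "sym (same_block \<rho> \<union> same_block (pi_eta r \<eta>))"
    by (auto simp: sym_def same_block_def)
  then have "sym (Rel \<rho> r \<eta>)" unfolding Rel_def by (rule sym_rtrancl)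
  then show "(x,y) \<in> Rel \<rho> r \<eta> \<Longrightarrow> (y,x) \<in> Rel \<rho> r \<eta>" by (meson symD)
qed

lemma cls_eq: "(x,y) \<in> Rel \<rho> r \<eta> \<Longrightarrow> Rel \<rho> r \<eta> `` {x} = Rel \<rho> r \<eta> `` {y}"
  using sym_Rel[of x y] unfolding Rel_def
  by (auto intro: rtrancl_trans)

lemma cls_self: "x \<in> Rel \<rho> r \<eta> `` {x}"
  by (simp add: Rel_def)

lemma cls_sub:
  assumes "partition_on (\<eta> \<times> {1..r}) \<rho>" "x \<in> \<eta> \<times> {1..r}" "(x,y) \<in> Rel \<rho> r \<eta>"
  shows "y \<in> \<eta> \<times> {1..r}"
proof -
  have "(x,y) \<in> (same_block \<rho> \<union> same_block (pi_eta r \<eta>))\<^sup>* \<and> y \<in> \<eta> \<times> {1..r}"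
  proof (rule path_restrict)
    show "(x, y) \<in> (same_block \<rho> \<union> same_block (pi_eta r \<eta>))\<^sup>*" using assms(3) by (simp add: Rel_def)
    show "x \<in> \<eta> \<times> {1..r}" by fact
    fix u v assume u: "u \<in> \<eta> \<times> {1..r}" and uv: "(u, v) \<in> same_block \<rho> \<union> same_block (pi_eta r \<eta>)"
    have "v \<in> \<eta> \<times> {1..r}"
    proof (cases "(u,v) \<in> same_block \<rho>")
      case True
      then obtain B where "B \<in> \<rho>" "v \<in> B" by (auto simp: same_block_def)
      then have "v \<in> \<Union>\<rho>" by blast
      moreover have "\<Union>\<rho> = \<eta> \<times> {1..r}" using partition_onD1[OF assms(1)] by simp
      ultimately show ?thesis by simp
    next
      case False
      then have "(u,v) \<in> same_block (pi_eta r \<eta>)" using uv by blast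
      then show ?thesis using u by (cases v) (auto simp: same_block_pi)
    qed
    then show "(u, v) \<in> same_block \<rho> \<union> same_block (pi_eta r \<eta>) \<and> v \<in> \<eta> \<times> {1..r}" using uv by simp
  qed
  then show ?thesis by blast
qed

lemma cls_form:
  assumes "partition_on (\<eta> \<times> {1..r}) \<rho>" "x \<in> \<eta> \<times> {1..r}"
  shows "Rel \<rho> r \<eta> `` {x} = fst ` (Rel \<rho> r \<eta> `` {x}) \<times> {1..r}"
proof
  show "Rel \<rho> r \<eta> `` {x} \<subseteq> fst ` (Rel \<rho> r \<eta> `` {x}) \<times> {1..r}"
    using cls_sub[OF assms] by force
next
  show "fst ` (Rel \<rho> r \<eta> `` {x}) \<times> {1..r} \<subseteq> Rel \<rho> r \<eta> `` {x}"
  proof (rule subsetI)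
    fix z assume "z \<in> fst ` (Rel \<rho> r \<eta> `` {x}) \<times> {1..r}"
    then obtain y j where z: "z = (fst y, j)" and j: "j \<in> {1..r}" and y: "(x, y) \<in> Rel \<rho> r \<eta>" by auto
    have yS: "y \<in> \<eta> \<times> {1..r}" using cls_sub[OF assms y] .
    have "(y, (fst y, j)) \<in> same_block (pi_eta r \<eta>)" using yS j by (auto simp: same_block_pi)
    then have "(y, (fst y, j)) \<in> Rel \<rho> r \<eta>" unfolding Rel_def by blast
    with y have "(x, (fst y, j)) \<in> Rel \<rho> r \<eta>" unfolding Rel_def by (meson rtrancl_trans)
    then show "z \<in> Rel \<rho> r \<eta> `` {x}" using z by simp
  qed
qed

definition tau :: "nat \<Rightarrow> nat set \<Rightarrow> (nat\<times>nat) set set \<Rightarrow> nat set set" where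
  "tau r \<eta> \<rho> = {b. b \<subseteq> \<eta> \<and> b \<times> {1..r} \<in> pjoin \<rho> (pi_eta r \<eta>)}"

definition rest :: "(nat\<times>nat) set set \<Rightarrow> nat \<Rightarrow> nat set \<Rightarrow> (nat\<times>nat) set set" where
  "rest \<rho> r b = {c\<in>\<rho>. c \<subseteq> b \<times> {1..r}}"

definition conn :: "nat \<Rightarrow> nat set \<Rightarrow> (nat\<times>nat) set set set" where
  "conn r b = {\<sigma>. partition_on (b \<times> {1..r}) \<sigma> \<and> pjoin \<sigma> (pi_eta r b) = {b \<times> {1..r}}}"

lemma times_r_inj: "(r::nat) \<ge> 1 \<Longrightarrow> a \<times> {1..r} = b \<times> {1..r} \<Longrightarrow> a = b"
  by (metis atLeastAtMost_iff empty_iff order_refl times_eq_iff)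

lemma times_r_sub: "(r::nat) \<ge> 1 \<Longrightarrow> a \<times> {1..r} \<subseteq> b \<times> {1..r} \<Longrightarrow> a \<subseteq> b"
proof
  fix x assume "r \<ge> 1" "a \<times> {1..r} \<subseteq> b \<times> {1..r}" "x \<in> a"
  then have "(x,1) \<in> a \<times> {1..r}" by simp
  then have "(x,1) \<in> b \<times> {1..r}" using \<open>a \<times> {1..r} \<subseteq> b \<times> {1..r}\<close> by (rule subsetD[rotated])
  then show "x \<in> b" by simp
qed

context
  fixes r :: nat and \<eta> :: "nat set" and \<rho> :: "(nat\<times>nat) set set"
  assumes r: "r \<ge> 1" and P: "partition_on (\<eta> \<times> {1..r}) \<rho>"
begin

lemma UP: "\<Union>\<rho> = \<eta> \<times> {1..r}" using partition_onD1[OF P] by simp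

lemma tau_iff: "b \<in> tau r \<eta> \<rho> \<longleftrightarrow> (\<exists>x\<in>\<eta> \<times> {1..r}. b \<times> {1..r} = Rel \<rho> r \<eta> `` {x})"
proof
  assume "b \<in> tau r \<eta> \<rho>"
  then have "b \<times> {1..r} \<in> (\<eta> \<times> {1..r}) // Rel \<rho> r \<eta>"
    unfolding tau_def pjoin_Rel UP by simp
  then show "\<exists>x\<in>\<eta> \<times> {1..r}. b \<times> {1..r} = Rel \<rho> r \<eta> `` {x}"
    by (elim quotientE) blast
next
  assume "\<exists>x\<in>\<eta> \<times> {1..r}. b \<times> {1..r} = Rel \<rho> r \<eta> `` {x}"
  then obtain x where x: "x \<in> \<eta> \<times> {1..r}" "b \<times> {1..r} = Rel \<rho> r \<eta> `` {x}" by blast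
  have "Rel \<rho> r \<eta> `` {x} \<subseteq> \<eta> \<times> {1..r}" using cls_sub[OF P x(1)] by blast
  then have "b \<times> {1..r} \<subseteq> \<eta> \<times> {1..r}" unfolding x(2) .
  then have "b \<subseteq> \<eta>" by (rule times_r_sub[OF r])
  moreover have "b \<times> {1..r} \<in> pjoin \<rho> (pi_eta r \<eta>)"
    unfolding pjoin_Rel UP x(2) using x(1) by (rule quotientI)
  ultimately show "b \<in> tau r \<eta> \<rho>" by (simp add: tau_def)
qed

lemma tau_cls:
  assumes "b \<in> tau r \<eta> \<rho>" "x \<in> b \<times> {1..r}"
  shows "Rel \<rho> r \<eta> `` {x} = b \<times> {1..r}"
proof -
  obtain z where z: "z \<in> \<eta> \<times> {1..r}" "b \<times> {1..r} = Rel \<rho> r \<eta> `` {z}"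
    using assms(1) tau_iff by blast
  then have "(z,x) \<in> Rel \<rho> r \<eta>" using assms(2) by auto
  then show ?thesis using cls_eq z(2) by metis
qed

lemma tau_pt:
  assumes "x \<in> \<eta> \<times> {1..r}"
  shows "fst ` (Rel \<rho> r \<eta> `` {x}) \<in> tau r \<eta> \<rho>" "x \<in> fst ` (Rel \<rho> r \<eta> `` {x}) \<times> {1..r}"
proof -
  show "fst ` (Rel \<rho> r \<eta> `` {x}) \<in> tau r \<eta> \<rho>"
    using tau_iff cls_form[OF P assms] assms by metis
  show "x \<in> fst ` (Rel \<rho> r \<eta> `` {x}) \<times> {1..r}"
    using cls_form[OF P assms] cls_self by metis
qed

lemma block_in:
  assumes "c \<in> \<rho>" "b \<in> tau r \<eta> \<rho>" "x \<in> c" "x \<in> b \<times> {1..r}"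
  shows "c \<subseteq> b \<times> {1..r}"
proof
  fix y assume "y \<in> c"
  then have "(x,y) \<in> same_block \<rho>" using assms by (auto simp: same_block_def)
  then have "(x,y) \<in> Rel \<rho> r \<eta>" unfolding Rel_def by blast
  then show "y \<in> b \<times> {1..r}" using tau_cls[OF assms(2,4)] by auto
qed

lemma tau_part: "partition_on \<eta> (tau r \<eta> \<rho>)"
proof (rule partition_onI)
  show "\<Union> (tau r \<eta> \<rho>) = \<eta>"
  proof
    show "\<Union> (tau r \<eta> \<rho>) \<subseteq> \<eta>" by (auto simp: tau_def)
    show "\<eta> \<subseteq> \<Union> (tau r \<eta> \<rho>)"
    proof
      fix k assume k: "k \<in> \<eta>"
      then have x: "(k,1) \<in> \<eta> \<times> {1..r}" using r by auto
      show "k \<in> \<Union> (tau r \<eta> \<rho>)" using tau_pt[OF x] by blast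
    qed
  qed
  show "disjnt p q" if "p \<in> tau r \<eta> \<rho>" "q \<in> tau r \<eta> \<rho>" "p \<noteq> q" for p q
  proof (rule ccontr)
    assume "\<not> disjnt p q"
    then obtain k where "k \<in> p" "k \<in> q" by (auto simp: disjnt_def)
    then have "(k,1) \<in> p \<times> {1..r}" "(k,1) \<in> q \<times> {1..r}" using r by auto
    then have "p \<times> {1..r} = q \<times> {1..r}" using tau_cls that by metis
    then show False using times_r_inj[OF r] that by blast
  qed
  show "{} \<notin> tau r \<eta> \<rho>"
  proof
    assume "{} \<in> tau r \<eta> \<rho>"
    then obtain x where "x \<in> \<eta> \<times> {1..r}" "{} \<times> {1..r} = Rel \<rho> r \<eta> `` {x}" using tau_iff by blast
    then show False using cls_self by (metis Sigma_empty1 empty_iff)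
  qed
qed

lemma rest_part:
  assumes b: "b \<in> tau r \<eta> \<rho>"
  shows "partition_on (b \<times> {1..r}) (rest \<rho> r b)"
proof -
  have "\<Union>(rest \<rho> r b) = b \<times> {1..r}"
  proof
    show "\<Union>(rest \<rho> r b) \<subseteq> b \<times> {1..r}" by (auto simp: rest_def)
    show "b \<times> {1..r} \<subseteq> \<Union>(rest \<rho> r b)"
    proof
      fix x assume x: "x \<in> b \<times> {1..r}"
      have "b \<subseteq> \<eta>" using b by (simp add: tau_def)
      then have "x \<in> \<Union>\<rho>" using x UP by auto
      then obtain c where c: "c \<in> \<rho>" "x \<in> c" by blast
      then have "c \<subseteq> b \<times> {1..r}" using block_in b x by blast
      then show "x \<in> \<Union>(rest \<rho> r b)" using c by (auto simp: rest_def)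
    qed
  qed
  moreover have "disjoint (rest \<rho> r b)"
    using partition_onD2[OF P] by (rule pairwise_subset) (auto simp: rest_def)
  moreover have "{} \<notin> rest \<rho> r b" using partition_onD3[OF P] by (auto simp: rest_def)
  ultimately show ?thesis by (simp add: partition_on_def)
qed

lemma rest_conn:
  assumes b: "b \<in> tau r \<eta> \<rho>"
  shows "pjoin (rest \<rho> r b) (pi_eta r b) = {b \<times> {1..r}}"
proof -
  let ?A = "b \<times> {1..r}"
  have bsub: "b \<subseteq> \<eta>" using b by (simp add: tau_def)
  have U: "\<Union>(rest \<rho> r b) = ?A" using partition_onD1[OF rest_part[OF b]] by simp
  have cl: "Rel (rest \<rho> r b) r b `` {x} = ?A" if x: "x \<in> ?A" for x
  proof
    show "Rel (rest \<rho> r b) r b `` {x} \<subseteq> ?A"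
      using cls_sub[OF rest_part[OF b] x] by blast
    show "?A \<subseteq> Rel (rest \<rho> r b) r b `` {x}"
    proof
      fix y assume y: "y \<in> ?A"
      then have "(x,y) \<in> Rel \<rho> r \<eta>" using tau_cls[OF b x] by auto
      then have "(x,y) \<in> (same_block (rest \<rho> r b) \<union> same_block (pi_eta r b))\<^sup>* \<and> y \<in> ?A"
      proof (intro path_restrict[OF _ x])
        show "(x, y) \<in> (same_block \<rho> \<union> same_block (pi_eta r \<eta>))\<^sup>*" if "(x, y) \<in> Rel \<rho> r \<eta>"
          using that by (simp add: Rel_def)
        fix u v assume u: "u \<in> ?A" and uv: "(u, v) \<in> same_block \<rho> \<union> same_block (pi_eta r \<eta>)"
        show "(u, v) \<in> same_block (rest \<rho> r b) \<union> same_block (pi_eta r b) \<and> v \<in> ?A"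
        proof (cases "(u,v) \<in> same_block \<rho>")
          case True
          then obtain c where c: "c \<in> \<rho>" "u \<in> c" "v \<in> c" by (auto simp: same_block_def)
          then have "c \<subseteq> ?A" using block_in b u by blast
          then have "c \<in> rest \<rho> r b" using c by (simp add: rest_def)
          then show ?thesis using c \<open>c \<subseteq> ?A\<close> by (auto simp: same_block_def)
        next
          case False
          then have "(u,v) \<in> same_block (pi_eta r \<eta>)" using uv by blast
          then show ?thesis using u by (auto simp: same_block_pi mem_Times_iff)
        qed
      qed
      then show "y \<in> Rel (rest \<rho> r b) r b `` {x}" by (simp add: Rel_def)
    qed
  qed
  have "?A \<noteq> {}" using tau_part b r by (auto simp: partition_on_def)
  then show ?thesis unfolding pjoin_Rel U quotient_def using cl by auto
qed

lemma rest_in_conn: "b \<in> tau r \<eta> \<rho> \<Longrightarrow> rest \<rho> r b \<in> conn r b"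
  using rest_part rest_conn by (simp add: conn_def)

lemma decomp: "(\<Union>b\<in>tau r \<eta> \<rho>. rest \<rho> r b) = \<rho>"
proof
  show "(\<Union>b\<in>tau r \<eta> \<rho>. rest \<rho> r b) \<subseteq> \<rho>" by (auto simp: rest_def)
  show "\<rho> \<subseteq> (\<Union>b\<in>tau r \<eta> \<rho>. rest \<rho> r b)"
  proof
    fix c assume c: "c \<in> \<rho>"
    then have "c \<noteq> {}" using partition_onD3[OF P] by auto
    then obtain x where x: "x \<in> c" by blast
    then have xS: "x \<in> \<eta> \<times> {1..r}" using c UP by auto
    let ?b = "fst ` (Rel \<rho> r \<eta> `` {x})"
    have "c \<subseteq> ?b \<times> {1..r}" using block_in[OF c tau_pt(1)[OF xS] x tau_pt(2)[OF xS]] .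
    then show "c \<in> (\<Union>b\<in>tau r \<eta> \<rho>. rest \<rho> r b)" using tau_pt(1)[OF xS] c by (auto simp: rest_def)
  qed
qed

end


lemma same_block_mono: "P \<subseteq> P' \<Longrightarrow> same_block P \<subseteq> same_block P'"
  by (auto simp: same_block_def)

context
  fixes r :: nat and \<eta> :: "nat set" and \<tau> :: "nat set set" and f :: "nat set \<Rightarrow> (nat\<times>nat) set set"
  assumes r: "r \<ge> 1" and T: "partition_on \<eta> \<tau>" and f: "f \<in> PiE \<tau> (conn r)"
begin

lemma f_in: "b \<in> \<tau> \<Longrightarrow> f b \<in> conn r b"
  using f by (rule PiE_mem)

lemma f_part: "b \<in> \<tau> \<Longrightarrow> partition_on (b \<times> {1..r}) (f b)"
  using f_in unfolding conn_def by blast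

lemma f_conn: "b \<in> \<tau> \<Longrightarrow> pjoin (f b) (pi_eta r b) = {b \<times> {1..r}}"
  using f_in unfolding conn_def by blast

lemma f_sub: "b \<in> \<tau> \<Longrightarrow> c \<in> f b \<Longrightarrow> c \<subseteq> b \<times> {1..r}"
  using partition_onD1[OF f_part] by blast

lemma f_ne: "b \<in> \<tau> \<Longrightarrow> c \<in> f b \<Longrightarrow> c \<noteq> {}"
  using partition_onD3[OF f_part] by blast

lemma tau_disj: "b \<in> \<tau> \<Longrightarrow> b' \<in> \<tau> \<Longrightarrow> k \<in> b \<Longrightarrow> k \<in> b' \<Longrightarrow> b = b'"
  using partition_onD2[OF T] unfolding disjoint_def by blast

lemma f_uniq:
  assumes "b \<in> \<tau>" "b' \<in> \<tau>" "c \<in> f b'" "x \<in> c" "x \<in> b \<times> {1..r}"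
  shows "b' = b"
proof -
  have "x \<in> b' \<times> {1..r}" using f_sub[OF assms(2,3)] assms(4) by blast
  then show ?thesis using tau_disj[OF assms(1,2), of "fst x"] assms(5) by auto
qed

lemma comp_part: "partition_on (\<eta> \<times> {1..r}) (\<Union>(f ` \<tau>))"
proof (rule partition_onI)
  have "\<Union>(\<Union>(f ` \<tau>)) = (\<Union>b\<in>\<tau>. \<Union>(f b))" by blast
  also have "\<dots> = (\<Union>b\<in>\<tau>. b \<times> {1..r})" using partition_onD1[OF f_part] by blast
  also have "\<dots> = (\<Union>\<tau>) \<times> {1..r}" by blast
  also have "\<dots> = \<eta> \<times> {1..r}" using partition_onD1[OF T] by simp
  finally show "\<Union>(\<Union>(f ` \<tau>)) = \<eta> \<times> {1..r}" .
  show "{} \<notin> \<Union>(f ` \<tau>)" using f_ne by blast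
  fix p q assume p: "p \<in> \<Union>(f ` \<tau>)" and q: "q \<in> \<Union>(f ` \<tau>)" and pq: "p \<noteq> q"
  from p obtain b where b: "b \<in> \<tau>" "p \<in> f b" by blast
  from q obtain b' where b': "b' \<in> \<tau>" "q \<in> f b'" by blast
  show "disjnt p q"
  proof (cases "b = b'")
    case True
    then show ?thesis using partition_onD2[OF f_part[OF b(1)]] b b' pq by (simp add: disjoint_def disjnt_def)
  next
    case False
    show ?thesis
    proof (rule ccontr)
      assume "\<not> disjnt p q"
      then obtain x where "x \<in> p" "x \<in> q" by (auto simp: disjnt_def)
      then have "x \<in> b \<times> {1..r}" using f_sub b by blast
      then have "b' = b" using f_uniq[OF b(1) b'(1) b'(2) \<open>x \<in> q\<close>] by blast
      with False show False by simp
    qed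
  qed
qed

lemma comp_cls:
  assumes b: "b \<in> \<tau>" and x: "x \<in> b \<times> {1..r}"
  shows "Rel (\<Union>(f ` \<tau>)) r \<eta> `` {x} = b \<times> {1..r}"
proof
  let ?A = "b \<times> {1..r}"
  let ?\<rho> = "\<Union>(f ` \<tau>)"
  have bsub: "b \<subseteq> \<eta>" using b partition_onD1[OF T] by blast
  show "Rel ?\<rho> r \<eta> `` {x} \<subseteq> ?A"
  proof
    fix y assume "y \<in> Rel ?\<rho> r \<eta> `` {x}"
    then have "(x,y) \<in> (same_block ?\<rho> \<union> same_block (pi_eta r \<eta>))\<^sup>*" by (simp add: Rel_def)
    then have "(x,y) \<in> (same_block ?\<rho> \<union> same_block (pi_eta r \<eta>))\<^sup>* \<and> y \<in> ?A"
    proof (rule path_restrict[OF _ x])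
      fix u v assume u: "u \<in> ?A" and uv: "(u, v) \<in> same_block ?\<rho> \<union> same_block (pi_eta r \<eta>)"
      have "v \<in> ?A"
      proof (cases "(u,v) \<in> same_block ?\<rho>")
        case True
        then obtain c b' where c: "b' \<in> \<tau>" "c \<in> f b'" "u \<in> c" "v \<in> c" by (auto simp: same_block_def)
        then have "b' = b" using f_uniq[OF b] u by blast
        then show ?thesis using f_sub c by blast
      next
        case False
        then have "(u,v) \<in> same_block (pi_eta r \<eta>)" using uv by blast
        then show ?thesis using u by (auto simp: same_block_pi mem_Times_iff)
      qed
      then show "(u, v) \<in> same_block ?\<rho> \<union> same_block (pi_eta r \<eta>) \<and> v \<in> ?A" using uv by simp
    qed
    then show "y \<in> ?A" by blast
  qed
  show "?A \<subseteq> Rel ?\<rho> r \<eta> `` {x}"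
  proof
    fix y assume y: "y \<in> ?A"
    have U: "\<Union>(f b) = ?A" using partition_onD1[OF f_part[OF b]] by simp
    have "Rel (f b) r b `` {x} \<in> (\<Union>(f b)) // Rel (f b) r b"
      unfolding U using x by (rule quotientI)
    then have "Rel (f b) r b `` {x} = ?A" using f_conn[OF b] unfolding pjoin_Rel by simp
    then have "(x,y) \<in> Rel (f b) r b" using y by blast
    moreover have "Rel (f b) r b \<subseteq> Rel ?\<rho> r \<eta>"
    proof -
      have "same_block (f b) \<subseteq> same_block ?\<rho>" using b by (intro same_block_mono) blast
      moreover have "same_block (pi_eta r b) \<subseteq> same_block (pi_eta r \<eta>)"
        using bsub by (auto simp: same_block_pi)
      ultimately show ?thesis unfolding Rel_def by (intro rtrancl_mono) blast
    qed
    ultimately show "y \<in> Rel ?\<rho> r \<eta> `` {x}" by blast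
  qed
qed

lemma comp_tau: "tau r \<eta> (\<Union>(f ` \<tau>)) = \<tau>"
proof
  show "tau r \<eta> (\<Union>(f ` \<tau>)) \<subseteq> \<tau>"
  proof
    fix b' assume "b' \<in> tau r \<eta> (\<Union>(f ` \<tau>))"
    then obtain x where x: "x \<in> \<eta> \<times> {1..r}" "b' \<times> {1..r} = Rel (\<Union>(f ` \<tau>)) r \<eta> `` {x}"
      using tau_iff[OF r comp_part] by blast
    have "fst x \<in> \<Union>\<tau>" using x(1) partition_onD1[OF T] by auto
    then obtain b where b: "b \<in> \<tau>" "fst x \<in> b" by blast
    then have "x \<in> b \<times> {1..r}" using x(1) by (auto simp: mem_Times_iff)
    then have "b' \<times> {1..r} = b \<times> {1..r}" using comp_cls[OF b(1)] x(2) by simp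
    then have "b' = b" by (rule times_r_inj[OF r])
    then show "b' \<in> \<tau>" using b by simp
  qed
  show "\<tau> \<subseteq> tau r \<eta> (\<Union>(f ` \<tau>))"
  proof
    fix b assume b: "b \<in> \<tau>"
    then have "b \<noteq> {}" using partition_onD3[OF T] by blast
    then obtain k where k: "k \<in> b" by blast
    have x: "(k,1) \<in> b \<times> {1..r}" using k r by simp
    have "(k,1) \<in> \<eta> \<times> {1..r}" using x b partition_onD1[OF T] by blast
    moreover have "b \<times> {1..r} = Rel (\<Union>(f ` \<tau>)) r \<eta> `` {(k,1)}" using comp_cls[OF b x] by simp
    ultimately show "b \<in> tau r \<eta> (\<Union>(f ` \<tau>))" using tau_iff[OF r comp_part] by blast
  qed
qed

lemma comp_rest: "b \<in> \<tau> \<Longrightarrow> rest (\<Union>(f ` \<tau>)) r b = f b"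
proof -
  assume b: "b \<in> \<tau>"
  show "rest (\<Union>(f ` \<tau>)) r b = f b"
  proof
    show "f b \<subseteq> rest (\<Union>(f ` \<tau>)) r b" using b f_sub by (auto simp: rest_def)
    show "rest (\<Union>(f ` \<tau>)) r b \<subseteq> f b"
    proof
      fix c assume "c \<in> rest (\<Union>(f ` \<tau>)) r b"
      then obtain b' where c: "b' \<in> \<tau>" "c \<in> f b'" "c \<subseteq> b \<times> {1..r}" by (auto simp: rest_def)
      obtain x where "x \<in> c" using f_ne[OF c(1,2)] by blast
      then have "b' = b" using f_uniq[OF b c(1,2)] c(3) by blast
      then show "c \<in> f b" using c by simp
    qed
  qed
qed

end


lemma mobius_decomp:
  fixes F :: "(nat \<times> nat) set set \<Rightarrow> real"
  assumes r: "r \<ge> 1" and fin: "finite \<eta>" and ne: "\<eta> \<noteq> {}"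
    and fact: "\<And>\<rho>. partition_on (\<eta> \<times> {1..r}) \<rho> \<Longrightarrow> F \<rho> = (\<Prod>b\<in>tau r \<eta> \<rho>. F (rest \<rho> r b))"
  shows "mobius r F \<eta> = (\<Sum>\<tau>\<in>{\<tau>. partition_on \<eta> \<tau>}. \<Prod>b\<in>\<tau>. \<Sum>\<sigma>\<in>conn r b. F \<sigma>)"
proof -
  let ?Sig = "SIGMA \<tau>:{\<tau>. partition_on \<eta> \<tau>}. PiE \<tau> (conn r)"
  have finconn: "finite (conn r b)" if "finite b" for b
  proof -
    have "finite {P. partition_on (b \<times> {1..r}) P}" using that by (intro finitely_many_partition_on) simp
    then show ?thesis by (rule rev_finite_subset) (auto simp: conn_def)
  qed
  have finP: "finite {\<tau>. partition_on \<eta> \<tau>}" using finitely_many_partition_on[OF fin] .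
  have finT: "finite \<tau>" if "partition_on \<eta> \<tau>" for \<tau> using finite_elements[OF fin that] .
  have finb: "finite b" if "partition_on \<eta> \<tau>" "b \<in> \<tau>" for \<tau> b
    using partition_onD1[OF that(1)] that(2) fin by (metis Union_upper finite_subset)
  have "mobius r F \<eta> = (\<Sum>\<rho>\<in>{\<rho>. partition_on (\<eta> \<times> {1..r}) \<rho>}. F \<rho>)"
    using ne by (simp add: mobius_def)
  also have "\<dots> = (\<Sum>(\<tau>,f)\<in>?Sig. \<Prod>b\<in>\<tau>. F (f b))"
  proof (rule sum.reindex_bij_witness[symmetric, where i = "\<lambda>\<rho>. (tau r \<eta> \<rho>, restrict (rest \<rho> r) (tau r \<eta> \<rho>))"
        and j = "\<lambda>p. \<Union>(snd p ` fst p)"])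
    fix p assume p: "p \<in> ?Sig"
    obtain \<tau> f where pe: "p = (\<tau>, f)" by (cases p)
    have T: "partition_on \<eta> \<tau>" and f: "f \<in> PiE \<tau> (conn r)" using p unfolding pe by simp_all
    have ct: "tau r \<eta> (\<Union>(f ` \<tau>)) = \<tau>" by (rule comp_tau[OF r T f])
    have cr: "rest (\<Union>(f ` \<tau>)) r b = f b" if "b \<in> \<tau>" for b by (rule comp_rest[OF r T f that])
    have "restrict (rest (\<Union>(f ` \<tau>)) r) \<tau> = f"
    proof
      fix b show "restrict (rest (\<Union>(f ` \<tau>)) r) \<tau> b = f b"
      proof (cases "b \<in> \<tau>")
        case True then show ?thesis using cr by simp
      next
        case False then show ?thesis using PiE_arb[OF f False] by simp
      qed
    qed
    then show "(tau r \<eta> (\<Union>(snd p ` fst p)), restrict (rest (\<Union>(snd p ` fst p)) r) (tau r \<eta> (\<Union>(snd p ` fst p)))) = p"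
      using ct pe by simp
    show "\<Union>(snd p ` fst p) \<in> {\<rho>. partition_on (\<eta> \<times> {1..r}) \<rho>}"
      using comp_part[OF r T f] pe by simp
    have "F (\<Union>(f ` \<tau>)) = (\<Prod>b\<in>tau r \<eta> (\<Union>(f ` \<tau>)). F (rest (\<Union>(f ` \<tau>)) r b))"
      using fact[OF comp_part[OF r T f]] .
    also have "\<dots> = (\<Prod>b\<in>\<tau>. F (f b))" unfolding ct using cr by (intro prod.cong) auto
    finally show "F (\<Union>(snd p ` fst p)) = (case p of (\<tau>, f) \<Rightarrow> \<Prod>b\<in>\<tau>. F (f b))"
      using pe by simp
  next
    fix \<rho> assume "\<rho> \<in> {\<rho>. partition_on (\<eta> \<times> {1..r}) \<rho>}"
    then have P: "partition_on (\<eta> \<times> {1..r}) \<rho>" by simp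
    have "(\<Union>b\<in>tau r \<eta> \<rho>. restrict (rest \<rho> r) (tau r \<eta> \<rho>) b) = (\<Union>b\<in>tau r \<eta> \<rho>. rest \<rho> r b)"
      by simp
    also have "\<dots> = \<rho>" by (rule decomp[OF r P])
    finally show "\<Union>(snd (tau r \<eta> \<rho>, restrict (rest \<rho> r) (tau r \<eta> \<rho>)) ` fst (tau r \<eta> \<rho>, restrict (rest \<rho> r) (tau r \<eta> \<rho>))) = \<rho>"
      by simp
    show "(tau r \<eta> \<rho>, restrict (rest \<rho> r) (tau r \<eta> \<rho>)) \<in> ?Sig"
      using tau_part[OF r P] rest_in_conn[OF r P] by (simp add: restrict_PiE_iff)
  qed
  also have "\<dots> = (\<Sum>\<tau>\<in>{\<tau>. partition_on \<eta> \<tau>}. \<Sum>f\<in>PiE \<tau> (conn r). \<Prod>b\<in>\<tau>. F (f b))"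
  proof (rule sum.Sigma[symmetric])
    show "finite {\<tau>. partition_on \<eta> \<tau>}" by (rule finP)
    show "\<forall>\<tau>\<in>{\<tau>. partition_on \<eta> \<tau>}. finite (PiE \<tau> (conn r))"
      using finT finb finconn by (blast intro: finite_PiE)
  qed
  also have "\<dots> = (\<Sum>\<tau>\<in>{\<tau>. partition_on \<eta> \<tau>}. \<Prod>b\<in>\<tau>. \<Sum>\<sigma>\<in>conn r b. F \<sigma>)"
  proof (rule sum.cong[OF refl])
    fix \<tau> assume "\<tau> \<in> {\<tau>. partition_on \<eta> \<tau>}"
    then have T: "partition_on \<eta> \<tau>" by simp
    show "(\<Sum>f\<in>PiE \<tau> (conn r). \<Prod>b\<in>\<tau>. F (f b)) = (\<Prod>b\<in>\<tau>. \<Sum>\<sigma>\<in>conn r b. F \<sigma>)"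
      by (rule prod_sum_PiE[symmetric]) (use finT[OF T] finb[OF T] finconn in blast)+
  qed
  finally show ?thesis .
qed

lemma part_small:
  assumes "finite \<eta>" "\<eta> \<noteq> {}" "partition_on \<eta> \<tau>" "\<not> 2 \<le> card \<tau>"
  shows "\<tau> = {\<eta>}"
proof -
  have fin: "finite \<tau>" using finite_elements assms(1,3) by blast
  have "\<tau> \<noteq> {}" using partition_onD1[OF assms(3)] assms(2) by auto
  then have "card \<tau> = 1" using fin assms(4) card_0_eq[OF fin] by linarith
  then obtain b where "\<tau> = {b}" by (rule card_1_singletonE)
  moreover then have "b = \<eta>" using partition_onD1[OF assms(3)] by simp
  ultimately show ?thesis by simp
qed

theorem proposition3p3:
  fixes n r :: nat and F :: "(nat \<times> nat) set set \<Rightarrow> real"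
  assumes "n \<ge> 1" and "r \<ge> 1"
    and factorization: "\<forall>\<eta> \<rho>. \<eta> \<subseteq> {1..n} \<and> \<eta> \<noteq> {} \<and> partition_on (\<eta> \<times> {1..r}) \<rho> \<longrightarrow>
      F \<rho> = (\<Prod>b\<in>{b. b \<subseteq> \<eta> \<and> b \<times> {1..r} \<in> pjoin \<rho> (pi_eta r \<eta>)}.
                 F {c\<in>\<rho>. c \<subseteq> b \<times> {1..r}})"
  shows "\<forall>\<eta>. \<eta> \<subseteq> {1..n} \<and> \<eta> \<noteq> {} \<longrightarrow>
    vcum r F \<eta> = (\<Sum>\<sigma>\<in>{\<sigma>. partition_on (\<eta> \<times> {1..r}) \<sigma> \<and> pjoin \<sigma> (pi_eta r \<eta>) = {\<eta> \<times> {1..r}}}. F \<sigma>)"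
proof -
  note r = \<open>r \<ge> 1\<close>
  define G where "G b = (\<Sum>\<sigma>\<in>conn r b. F \<sigma>)" for b
  have main: "vcum r F \<eta> = G \<eta>" if "\<eta> \<subseteq> {1..n}" "\<eta> \<noteq> {}" for \<eta>
    using that
  proof (induction "card \<eta>" arbitrary: \<eta> rule: less_induct)
    case less
    have fin: "finite \<eta>" using less.prems(1) finite_subset by blast
    have MD: "mobius r F \<eta> = (\<Sum>\<tau>\<in>{\<tau>. partition_on \<eta> \<tau>}. \<Prod>b\<in>\<tau>. G b)"
      unfolding G_def
    proof (rule mobius_decomp[OF r fin less.prems(2)])
      fix \<rho> assume rp: "partition_on (\<eta> \<times> {1..r}) \<rho>"
      have "F \<rho> = (\<Prod>b\<in>{b. b \<subseteq> \<eta> \<and> b \<times> {1..r} \<in> pjoin \<rho> (pi_eta r \<eta>)}. F {c\<in>\<rho>. c \<subseteq> b \<times> {1..r}})"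
        using factorization[rule_format, of \<eta> \<rho>] less.prems rp by simp
      then show "F \<rho> = (\<Prod>b\<in>tau r \<eta> \<rho>. F (rest \<rho> r b))"
        unfolding tau_def rest_def .
    qed
    let ?P = "{\<tau>. partition_on \<eta> \<tau>}"
    let ?P2 = "{\<tau>. partition_on \<eta> \<tau> \<and> 2 \<le> card \<tau>}"
    have Psplit: "?P = insert {\<eta>} ?P2"
    proof (rule set_eqI)
      fix \<tau> show "\<tau> \<in> ?P \<longleftrightarrow> \<tau> \<in> insert {\<eta>} ?P2"
      proof
        assume "\<tau> \<in> ?P"
        then have T: "partition_on \<eta> \<tau>" by simp
        show "\<tau> \<in> insert {\<eta>} ?P2"
        proof (cases "2 \<le> card \<tau>")
          case True then show ?thesis using T by simp
        next
          case False then show ?thesis using part_small[OF fin less.prems(2) T] by simp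
        qed
      next
        assume "\<tau> \<in> insert {\<eta>} ?P2"
        then show "\<tau> \<in> ?P" using partition_on_space[OF less.prems(2)] by blast
      qed
    qed
    have notin: "{\<eta>} \<notin> ?P2" by simp
    have finP2: "finite ?P2" using finitely_many_partition_on[OF fin] by (rule rev_finite_subset) auto
    have MD2: "mobius r F \<eta> = G \<eta> + (\<Sum>\<tau>\<in>?P2. \<Prod>b\<in>\<tau>. G b)"
      unfolding MD Psplit sum.insert[OF finP2 notin] by simp
    show ?case
    proof (cases "card \<eta> \<le> 1")
      case True
      have "?P2 = {}"
      proof (rule ccontr)
        assume "?P2 \<noteq> {}"
        then obtain \<tau> where T: "partition_on \<eta> \<tau>" "2 \<le> card \<tau>" by auto
        then obtain b where "b \<in> \<tau>" by fastforce
        then have "card b < card \<eta>" using block_card_less[OF fin T(1) T(2)] by blast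
        moreover have "b \<noteq> {}" using partition_onD3[OF T(1)] \<open>b \<in> \<tau>\<close> by blast
        moreover have "finite b" using fin partition_onD1[OF T(1)] \<open>b \<in> \<tau>\<close> by (metis Union_upper finite_subset)
        ultimately show False using True card_0_eq[of b] by linarith
      qed
      have "vcum r F \<eta> = mobius r F \<eta>" using True by (subst vcum.simps) (simp del: vcum.simps)
      then show ?thesis using MD2 \<open>?P2 = {}\<close> by (simp del: vcum.simps)
    next
      case False
      have "vcum r F \<eta> = mobius r F \<eta> - (\<Sum>\<tau>\<in>?P2. \<Prod>b\<in>\<tau>. vcum r F b)"
        using False fin by (subst vcum.simps) (simp del: vcum.simps)
      also have "(\<Sum>\<tau>\<in>?P2. \<Prod>b\<in>\<tau>. vcum r F b) = (\<Sum>\<tau>\<in>?P2. \<Prod>b\<in>\<tau>. G b)"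
      proof (rule sum.cong[OF refl], rule prod.cong[OF refl])
        fix \<tau> b assume "\<tau> \<in> ?P2" "b \<in> \<tau>"
        then have T: "partition_on \<eta> \<tau>" "2 \<le> card \<tau>" by auto
        have "card b < card \<eta>" using block_card_less[OF fin T(1) T(2) \<open>b \<in> \<tau>\<close>] .
        moreover have "b \<subseteq> {1..n}" using less.prems(1) partition_onD1[OF T(1)] \<open>b \<in> \<tau>\<close> by blast
        moreover have "b \<noteq> {}" using partition_onD3[OF T(1)] \<open>b \<in> \<tau>\<close> by blast
        ultimately show "vcum r F b = G b" by (rule less.hyps)
      qed
      finally show ?thesis using MD2 by (simp del: vcum.simps)
    qed
  qed
  show ?thesis using main unfolding G_def conn_def by blast
qed

end
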